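(* Let $G$ be a graph of order $n\ge 4$ with no isolated vertices. Then $G$ is a galaxy if and only if $b_{OCD}(G)=|E(G)|$.
   Context: A galaxy is a forest in which every connected component is a star $K_{1,r}$ with $r\ge 1$. A set $S\subseteq V$ is a dominating set of a graph $G=(V,E)$ if every vertex not in $S$ is adjacent to a vertex of $S$. A set $\tilde D\subseteq V$ is an outer-connected dominating set of $G$ if $\tilde D$ is dominating and the induced subgraph $G[V\setminus\tilde D]$ is connected (the empty graph counts as connected). $\tilde\gamma_c(G)$ is the minimum size of an outer-connected dominating set. For a graph $G$ without isolated vertices, the outer-connected bondage number $b_{OCD}(G)$ is the minimum number of edges whose removal from $G$ yields a graph $G'$ with $\tilde\gamma_c(G')>\tilde\gamma_c(G)$. *)

theory Defs
  imports Main
begin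

definition simple_graph :: "'a set \<Rightarrow> 'a set set \<Rightarrow> bool" where
  "simple_graph V E \<longleftrightarrow> finite V \<and>
     (\<forall>e\<in>E. \<exists>u v. u \<in> V \<and> v \<in> V \<and> u \<noteq> v \<and> e = {u, v})"

definition no_isolated :: "'a set \<Rightarrow> 'a set set \<Rightarrow> bool" where
  "no_isolated V E \<longleftrightarrow> (\<forall>v\<in>V. \<exists>u. {u, v} \<in> E)"

definition adj_in :: "'a set \<Rightarrow> 'a set set \<Rightarrow> 'a \<Rightarrow> 'a \<Rightarrow> bool" where
  "adj_in W E x y \<longleftrightarrow> x \<in> W \<and> y \<in> W \<and> {x, y} \<in> E"

text \<open>The induced subgraph G[W] is connected (the empty graph counts as connected).\<close>
definition induced_connected :: "'a set \<Rightarrow> 'a set set \<Rightarrow> bool" where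
  "induced_connected W E \<longleftrightarrow> (\<forall>u\<in>W. \<forall>v\<in>W. (adj_in W E)\<^sup>*\<^sup>* u v)"

definition dominating :: "'a set \<Rightarrow> 'a set set \<Rightarrow> 'a set \<Rightarrow> bool" where
  "dominating V E S \<longleftrightarrow> S \<subseteq> V \<and> (\<forall>v\<in>V - S. \<exists>u\<in>S. {u, v} \<in> E)"

definition outer_connected_dominating :: "'a set \<Rightarrow> 'a set set \<Rightarrow> 'a set \<Rightarrow> bool" where
  "outer_connected_dominating V E D \<longleftrightarrow> dominating V E D \<and> induced_connected (V - D) E"

definition ocd_number :: "'a set \<Rightarrow> 'a set set \<Rightarrow> nat" where
  "ocd_number V E = Min (card ` {D. outer_connected_dominating V E D})"

definition b_OCD :: "'a set \<Rightarrow> 'a set set \<Rightarrow> nat" where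
  "b_OCD V E = (LEAST k. \<exists>F. F \<subseteq> E \<and> card F = k \<and> ocd_number V (E - F) > ocd_number V E)"

definition component :: "'a set \<Rightarrow> 'a set set \<Rightarrow> 'a \<Rightarrow> 'a set" where
  "component V E v = {u. (adj_in V E)\<^sup>*\<^sup>* v u}"

text \<open>Galaxy: every connected component is a star K_{1,r} with r \<ge> 1,
  i.e. it has a centre c, at least 2 vertices, and its edges are exactly the
  edges from c to the other vertices of the component (hence G is a forest).\<close>
definition galaxy :: "'a set \<Rightarrow> 'a set set \<Rightarrow> bool" where
  "galaxy V E \<longleftrightarrow> (\<forall>v\<in>V. \<exists>c\<in>component V E v. card (component V E v) \<ge> 2 \<and>
      {e\<in>E. e \<subseteq> component V E v} = {{c, x} | x. x \<in> component V E v \<and> x \<noteq> c})"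

end

theory Submission
  imports Defs
begin

lemma edge_in:
  assumes "simple_graph V E" "{a,b} \<in> E"
  shows "a \<in> V \<and> b \<in> V \<and> a \<noteq> b"
proof -
  obtain u v where "u \<in> V" "v \<in> V" "u \<noteq> v" "{a,b} = {u,v}"
    using assms unfolding simple_graph_def by blast
  then show ?thesis by (metis doubleton_eq_iff insert_absorb2 singleton_insert_inj_eq)
qed

lemma ocd_fin: "finite V \<Longrightarrow> finite {D. outer_connected_dominating V E D}"
  by (rule finite_subset[of _ "Pow V"])
     (auto simp: outer_connected_dominating_def dominating_def)

lemma ocd_V: "outer_connected_dominating V E V"
  by (simp add: outer_connected_dominating_def dominating_def induced_connected_def)

lemma ocd_le: "finite V \<Longrightarrow> outer_connected_dominating V E D \<Longrightarrow> ocd_number V E \<le> card D"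
  unfolding ocd_number_def by (rule Min_le) (auto intro: finite_imageI ocd_fin)

lemma ocd_ex: "finite V \<Longrightarrow> \<exists>D. outer_connected_dominating V E D \<and> ocd_number V E = card D"
proof -
  assume f: "finite V"
  have "ocd_number V E \<in> card ` {D. outer_connected_dominating V E D}"
    unfolding ocd_number_def using ocd_V f by (intro Min_in) (auto intro: finite_imageI ocd_fin)
  then show ?thesis by auto
qed

lemma two_nb:
  assumes "outer_connected_dominating V E D" "a \<in> V - D" "b \<in> V - D" "a \<noteq> b"
  shows "\<exists>a'. a' \<in> V - D \<and> {a,a'} \<in> E"
proof -
  have "(adj_in (V - D) E)\<^sup>*\<^sup>* a b" using assms
    unfolding outer_connected_dominating_def induced_connected_def by blast
  then show ?thesis using assms(4)
    by (cases rule: converse_rtranclpE) (auto simp: adj_in_def)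
qed

lemma card_lb:
  assumes "finite V" "outer_connected_dominating V E D"
    and "\<And>a b. a \<in> V - D \<Longrightarrow> b \<in> V - D \<Longrightarrow> a = b"
  shows "card V - 1 \<le> card D"
proof -
  have sub: "D \<subseteq> V" using assms(2) by (simp add: outer_connected_dominating_def dominating_def)
  have "card (V - D) \<le> Suc 0" using assms by (simp add: card_le_Suc0_iff_eq)
  moreover have "card (V - D) = card V - card D" using sub assms(1) by (simp add: card_Diff_subset finite_subset)
  ultimately show ?thesis by simp
qed

lemma ocd_upper_edge:
  assumes "finite V" "simple_graph V E'" "{p,q} \<in> E'"
  shows "ocd_number V E' \<le> card V - 1"
proof -
  have e: "p \<in> V" "q \<in> V" "p \<noteq> q" using edge_in[OF assms(2,3)] by auto
  have "outer_connected_dominating V E' (V - {p})"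
    unfolding outer_connected_dominating_def dominating_def induced_connected_def
    using e assms(3) by (auto simp: insert_commute)
  from ocd_le[OF assms(1) this] show ?thesis using e assms(1) by simp
qed

lemma galaxy_leaf:
  assumes sg: "simple_graph V E" and g: "galaxy V E" and ab: "{a,b} \<in> E"
  shows "(\<forall>z. {a,z}\<in>E \<longrightarrow> z = b) \<or> (\<forall>z. {b,z}\<in>E \<longrightarrow> z = a)"
proof -
  have e: "a \<in> V" "b \<in> V" "a \<noteq> b" using edge_in[OF sg ab] by auto
  define C where "C = component V E a"
  obtain c where c: "c \<in> C" "{e\<in>E. e \<subseteq> C} = {{c, x} | x. x \<in> C \<and> x \<noteq> c}"
    using g e unfolding galaxy_def C_def by blast
  have aC: "a \<in> C" by (simp add: C_def component_def)
  have clos: "\<And>y z. y \<in> C \<Longrightarrow> {y,z} \<in> E \<Longrightarrow> z \<in> C"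
  proof -
    fix y z assume "y \<in> C" "{y,z} \<in> E"
    then have "adj_in V E y z" using edge_in[OF sg] by (auto simp: adj_in_def)
    then show "z \<in> C" using \<open>y \<in> C\<close> by (auto simp: C_def component_def)
  qed
  have bC: "b \<in> C" using clos[OF aC ab] .
  have "{a,b} \<in> {e\<in>E. e \<subseteq> C}" using ab aC bC by auto
  then obtain x where x: "{a,b} = {c,x}" "x \<in> C" "x \<noteq> c" using c by auto
  have star: "\<And>y z. y \<in> C \<Longrightarrow> y \<noteq> c \<Longrightarrow> {y,z} \<in> E \<Longrightarrow> z = c"
  proof -
    fix y z assume y: "y \<in> C" "y \<noteq> c" "{y,z} \<in> E"
    have "z \<in> C" using clos y by blast
    then have "{y,z} \<in> {e\<in>E. e \<subseteq> C}" using y by auto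
    then obtain x' where "{y,z} = {c,x'}" using c by auto
    then show "z = c" using y(2) by (auto simp: doubleton_eq_iff)
  qed
  show ?thesis
  proof (cases "c = a")
    case True
    then have "b \<noteq> c" using e by simp
    then show ?thesis using star[OF bC] True by auto
  next
    case False
    then have "c = b" "a \<noteq> c" using x by (auto simp: doubleton_eq_iff)
    then show ?thesis using star[OF aC] by auto
  qed
qed

lemma leaf_galaxy:
  assumes sg: "simple_graph V E" and ni: "no_isolated V E"
    and lf: "\<And>a b. {a,b}\<in>E \<Longrightarrow> (\<forall>z. {a,z}\<in>E \<longrightarrow> z = b) \<or> (\<forall>z. {b,z}\<in>E \<longrightarrow> z = a)"
  shows "galaxy V E"
  unfolding galaxy_def
proof
  fix v assume vV: "v \<in> V"
  obtain w where wv: "{w,v} \<in> E" using ni vV unfolding no_isolated_def by blast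
  have vw: "{v,w} \<in> E" using wv by (simp add: insert_commute)
  define c where "c = (if (\<forall>z. {v,z}\<in>E \<longrightarrow> z = w) then w else v)"
  have P: "\<And>x z. {c,x} \<in> E \<Longrightarrow> {x,z} \<in> E \<Longrightarrow> z = c"
  proof -
    fix x z assume cx: "{c,x} \<in> E" and xz: "{x,z} \<in> E"
    show "z = c"
    proof (cases "\<forall>z. {v,z}\<in>E \<longrightarrow> z = w")
      case True
      then have cw: "c = w" by (simp add: c_def)
      show ?thesis
      proof (cases "x = v")
        case True then show ?thesis using xz cw \<open>\<forall>z. {v,z}\<in>E \<longrightarrow> z = w\<close> by auto
      next
        case False
        have "\<not> (\<forall>z. {w,z}\<in>E \<longrightarrow> z = x)" using wv False by auto
        then show ?thesis using lf[of w x] cx cw xz by auto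
      qed
    next
      case False
      then have cv: "c = v" unfolding c_def by (simp only: if_False)
      have "{v,x} \<in> E" using cx cv by simp
      from lf[OF this] show ?thesis
      proof
        assume "\<forall>z. {v,z}\<in>E \<longrightarrow> z = x"
        then have "w = x" using vw by auto
        then show ?thesis using False \<open>\<forall>z. {v,z}\<in>E \<longrightarrow> z = x\<close> by auto
      next
        assume "\<forall>z. {x,z}\<in>E \<longrightarrow> z = v" then show ?thesis using xz cv by auto
      qed
    qed
  qed
  define N where "N = {x. {c,x} \<in> E}"
  have vc: "v = c \<or> {c,v} \<in> E" using wv by (cases "\<forall>z. {v,z}\<in>E \<longrightarrow> z = w") (simp_all add: c_def)
  have cr: "(adj_in V E)\<^sup>*\<^sup>* v c"
  proof (cases "c = v")
    case False
    then have "c = w" by (auto simp: c_def split: if_splits)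
    then have "adj_in V E v c" using vw edge_in[OF sg vw] by (simp add: adj_in_def)
    then show ?thesis by simp
  qed simp
  have Ceq: "component V E v = insert c N"
  proof
    show "component V E v \<subseteq> insert c N"
    proof
      fix u assume "u \<in> component V E v"
      then have "(adj_in V E)\<^sup>*\<^sup>* v u" by (simp add: component_def)
      then show "u \<in> insert c N"
      proof (induction rule: rtranclp_induct)
        case base then show ?case using vc by (auto simp: N_def)
      next
        case (step y z)
        then have yz: "{y,z} \<in> E" by (simp add: adj_in_def)
        show ?case
        proof (cases "y = c")
          case True then show ?thesis using yz by (simp add: N_def)
        next
          case False
          then have "{c,y} \<in> E" using step by (simp add: N_def)
          then show ?thesis using P yz by auto
        qed
      qed
    qed
  next
    show "insert c N \<subseteq> component V E v"
    proof
      fix u assume "u \<in> insert c N"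
      then show "u \<in> component V E v"
      proof
        assume "u = c" then show ?thesis using cr by (simp add: component_def)
      next
        assume "u \<in> N"
        then have "adj_in V E c u" using edge_in[OF sg, of c u] by (simp add: N_def adj_in_def)
        then show ?thesis using cr by (simp add: component_def)
      qed
    qed
  qed
  have "c \<in> V" using vV edge_in[OF sg wv] by (simp add: c_def)
  then have NV: "insert c N \<subseteq> V" using edge_in[OF sg] by (auto simp: N_def)
  have finC: "finite (insert c N)" using sg NV unfolding simple_graph_def by (meson finite_subset)
  obtain x where xN: "x \<in> N"
    using vc wv by (auto simp: N_def c_def split: if_splits)
  have xc: "x \<noteq> c" using xN edge_in[OF sg] by (auto simp: N_def)
  have "card {c,x} \<le> card (insert c N)" using finC xN by (intro card_mono) auto
  then have card2: "card (insert c N) \<ge> 2" using xc by simp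
  have edges: "{e\<in>E. e \<subseteq> insert c N} = {{c, x} | x. x \<in> insert c N \<and> x \<noteq> c}"
  proof
    show "{e\<in>E. e \<subseteq> insert c N} \<subseteq> {{c, x} | x. x \<in> insert c N \<and> x \<noteq> c}"
    proof
      fix e assume e: "e \<in> {e\<in>E. e \<subseteq> insert c N}"
      then obtain a b where ab: "e = {a,b}" "a \<noteq> b" using sg unfolding simple_graph_def by blast
      have abE: "{a,b} \<in> E" using e ab by simp
      have "a \<in> insert c N" "b \<in> insert c N" using e ab by auto
      have "a = c \<or> b = c"
      proof (rule ccontr)
        assume "\<not> (a = c \<or> b = c)"
        then have "{c,a} \<in> E" using \<open>a \<in> insert c N\<close> by (simp add: N_def)
        then have "b = c" using P abE by blast
        then show False using \<open>\<not> (a = c \<or> b = c)\<close> by simp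
      qed
      then show "e \<in> {{c, x} | x. x \<in> insert c N \<and> x \<noteq> c}"
        using ab \<open>a \<in> insert c N\<close> \<open>b \<in> insert c N\<close> by (auto simp: insert_commute)
    qed
  next
    show "{{c, x} | x. x \<in> insert c N \<and> x \<noteq> c} \<subseteq> {e\<in>E. e \<subseteq> insert c N}"
      by (auto simp: N_def)
  qed
  show "\<exists>c'\<in>component V E v. 2 \<le> card (component V E v) \<and>
      {e \<in> E. e \<subseteq> component V E v} = {{c', x} |x. x \<in> component V E v \<and> x \<noteq> c'}"
    unfolding Ceq using card2 edges by blast
qed

theorem mainTheorem11:
  fixes V :: "'a set" and E :: "'a set set"
  assumes "simple_graph V E"
    and "card V \<ge> 4"
    and "no_isolated V E"
  shows "galaxy V E \<longleftrightarrow> b_OCD V E = card E"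
proof -
  note sg = assms(1)
  have fV: "finite V" using sg by (simp add: simple_graph_def)
  have fE: "finite E"
    by (rule finite_subset[of _ "Pow V"]) (use edge_in[OF sg] sg in \<open>auto simp: simple_graph_def\<close>)
  have Vne: "V \<noteq> {}" using assms(2) by auto
  then obtain v0 where "v0 \<in> V" by blast
  then obtain w0 where w0: "{w0,v0} \<in> E" using assms(3) unfolding no_isolated_def by blast
  have Ene: "E \<noteq> {}" using w0 by auto
  have sub_sg: "\<And>F. simple_graph V (E - F)" using sg by (auto simp: simple_graph_def)
  have single: "\<And>p q. {p,q} \<in> E \<Longrightarrow> card V - 1 \<le> ocd_number V {{p,q}}"
  proof -
    fix p q assume pq: "{p,q} \<in> E"
    obtain D where D: "outer_connected_dominating V {{p,q}} D" "ocd_number V {{p,q}} = card D"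
      using ocd_ex[OF fV] by blast
    have "card V - 1 \<le> card D"
    proof (rule card_lb[OF fV D(1)])
      fix a b assume a: "a \<in> V - D" and b: "b \<in> V - D"
      show "a = b"
      proof (rule ccontr)
        assume "a \<noteq> b"
        then obtain a' where a': "a' \<in> V - D" "{a,a'} \<in> {{p,q}}" using two_nb[OF D(1) a b] by blast
        then have "p \<notin> D" "q \<notin> D" using a by (auto simp: doubleton_eq_iff)
        have "p \<in> V - D" using a a' by (auto simp: doubleton_eq_iff)
        then obtain u where "u \<in> D" "{u,p} \<in> {{p,q}}" using D(1)
          unfolding outer_connected_dominating_def dominating_def by blast
        then show False using \<open>p \<notin> D\<close> \<open>q \<notin> D\<close> by (auto simp: doubleton_eq_iff)
      qed
    qed
    then show "card V - 1 \<le> ocd_number V {{p,q}}" using D by simp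
  qed
  show ?thesis
  proof
    assume g: "galaxy V E"
    have lowG: "card V - 1 \<le> ocd_number V E"
    proof -
      obtain D where D: "outer_connected_dominating V E D" "ocd_number V E = card D"
        using ocd_ex[OF fV] by blast
      have "card V - 1 \<le> card D"
      proof (rule card_lb[OF fV D(1)])
        fix a b assume a: "a \<in> V - D" and b: "b \<in> V - D"
        show "a = b"
        proof (rule ccontr)
          assume "a \<noteq> b"
          then obtain a' where a': "a' \<in> V - D" "{a,a'} \<in> E" using two_nb[OF D(1) a b] by blast
          obtain u where u: "u \<in> D" "{u,a} \<in> E" using D(1) a
            unfolding outer_connected_dominating_def dominating_def by blast
          obtain u' where u': "u' \<in> D" "{u',a'} \<in> E" using D(1) a'
            unfolding outer_connected_dominating_def dominating_def by blast
          from galaxy_leaf[OF sg g a'(2)] show False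
          proof
            assume "\<forall>z. {a,z}\<in>E \<longrightarrow> z = a'"
            then have "u = a'" using u by (auto simp: insert_commute)
            then show False using u a' by auto
          next
            assume "\<forall>z. {a',z}\<in>E \<longrightarrow> z = a"
            then have "u' = a" using u' by (auto simp: insert_commute)
            then show False using u' a by auto
          qed
        qed
      qed
      then show ?thesis using D by simp
    qed
    have empty_big: "ocd_number V (E - E) > ocd_number V E"
    proof -
      obtain D where D: "outer_connected_dominating V (E - E) D" "ocd_number V (E - E) = card D"
        using ocd_ex[OF fV] by blast
      have "D = V" using D(1) unfolding outer_connected_dominating_def dominating_def by auto
      moreover have "ocd_number V E \<le> card V - 1"
        using ocd_upper_edge[OF fV sg w0] .
      moreover have "card V > 0" using fV Vne by (simp add: card_gt_0_iff)
      ultimately show ?thesis using D by simp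
    qed
    have only: "\<And>F. F \<subseteq> E \<Longrightarrow> ocd_number V (E - F) > ocd_number V E \<Longrightarrow> card F = card E"
    proof -
      fix F assume F: "F \<subseteq> E" "ocd_number V (E - F) > ocd_number V E"
      have "E - F = {}"
      proof (rule ccontr)
        assume "E - F \<noteq> {}"
        then obtain e where e: "e \<in> E - F" by blast
        then obtain p q where "e = {p,q}" using sg unfolding simple_graph_def by blast
        then have "ocd_number V (E - F) \<le> card V - 1"
          using ocd_upper_edge[OF fV sub_sg] e by blast
        then show False using F lowG by simp
      qed
      then have "F = E" using F by auto
      then show "card F = card E" by simp
    qed
    show "b_OCD V E = card E"
      unfolding b_OCD_def
    proof (rule Least_equality)
      show "\<exists>F\<subseteq>E. card F = card E \<and> ocd_number V E < ocd_number V (E - F)"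
        using empty_big by blast
    next
      fix k assume "\<exists>F\<subseteq>E. card F = k \<and> ocd_number V E < ocd_number V (E - F)"
      then obtain F where "F \<subseteq> E" "card F = k" "ocd_number V E < ocd_number V (E - F)" by blast
      then show "card E \<le> k" using only[of F] by simp
    qed
  next
    assume b: "b_OCD V E = card E"
    show "galaxy V E"
    proof (rule ccontr)
      assume ng: "\<not> galaxy V E"
      have "\<not> (\<forall>a b. {a,b}\<in>E \<longrightarrow> (\<forall>z. {a,z}\<in>E \<longrightarrow> z = b) \<or> (\<forall>z. {b,z}\<in>E \<longrightarrow> z = a))"
      proof
        assume "\<forall>a b. {a,b}\<in>E \<longrightarrow> (\<forall>z. {a,z}\<in>E \<longrightarrow> z = b) \<or> (\<forall>z. {b,z}\<in>E \<longrightarrow> z = a)"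
        then have "galaxy V E" by (intro leaf_galaxy[OF sg assms(3)]) (simp only:)
        then show False using ng by simp
      qed
      then obtain u v where uv: "{u,v} \<in> E" and
        nl: "\<not> (\<forall>z. {u,z}\<in>E \<longrightarrow> z = v)" "\<not> (\<forall>z. {v,z}\<in>E \<longrightarrow> z = u)"
        by (simp only: not_all not_imp de_Morgan_disj) blast
      obtain x where x: "{u,x} \<in> E" "x \<noteq> v" using nl(1) by (simp only: not_all not_imp) blast
      obtain y where y: "{v,y} \<in> E" "y \<noteq> u" using nl(2) by (simp only: not_all not_imp) blast
      have e: "u \<in> V" "v \<in> V" "u \<noteq> v" using edge_in[OF sg uv] by auto
      have ex: "x \<in> V" "x \<noteq> u" using edge_in[OF sg x(1)] by auto
      have ey: "y \<in> V" "y \<noteq> v" using edge_in[OF sg y(1)] by auto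
      have "outer_connected_dominating V E (V - {u,v})"
        unfolding outer_connected_dominating_def dominating_def induced_connected_def
      proof (intro conjI ballI)
        show "V - {u, v} \<subseteq> V" by auto
      next
        fix z assume "z \<in> V - (V - {u, v})"
        then have "z = u \<or> z = v" by auto
        then show "\<exists>s\<in>V - {u, v}. {s, z} \<in> E"
          using x y ex ey by (auto simp: insert_commute)
      next
        fix a b assume "a \<in> V - (V - {u, v})" "b \<in> V - (V - {u, v})"
        then have ab: "a \<in> {u,v}" "b \<in> {u,v}" using e by auto
        have "adj_in (V - (V - {u, v})) E u v" "adj_in (V - (V - {u, v})) E v u"
          using e uv by (auto simp: adj_in_def insert_commute)
        then show "(adj_in (V - (V - {u, v})) E)\<^sup>*\<^sup>* a b" using ab by auto
      qed
      from ocd_le[OF fV this] have up: "ocd_number V E \<le> card V - 2"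
        using e fV by (simp add: card_Diff_subset)
      define F where "F = E - {{u,v}}"
      have EF: "E - F = {{u,v}}" using uv by (auto simp: F_def)
      have "ocd_number V (E - F) > ocd_number V E"
        using single[OF uv] up assms(2) EF by simp
      then have "b_OCD V E \<le> card F" unfolding b_OCD_def
        by (intro Least_le) (auto simp: F_def)
      moreover have "card F < card E" using uv fE by (simp add: F_def card_Diff_singleton_if) (metis card_gt_0_iff diff_less zero_less_one One_nat_def empty_iff)
      ultimately show False using b by simp
    qed
  qed
qed

end
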